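(* Let $\mathfrak g$ be a finite-dimensional real Lie algebra whose derived algebra $\mathfrak g'=[\mathfrak g,\mathfrak g]$ is abelian, and suppose that for every $Y\in\mathfrak g$ the restriction $\operatorname{ad}(Y)|_{\mathfrak g'}$ is semisimple with real eigenvalues. Then $\mathfrak g$ admits an inner product with a geodesic basis, unless $\mathfrak g$ is isomorphic to $\mathcal A_n$ for some $n\ge 1$.
   Context: For an inner product $\langle\cdot,\cdot\rangle$ on a real Lie algebra $\mathfrak g$, a nonzero $X\in\mathfrak g$ is a geodesic element if $\langle X,[X,Y]\rangle=0$ for all $Y\in\mathfrak g$; a geodesic basis is a basis consisting of geodesic elements. For $n\ge1$, $\mathcal A_n$ denotes the $(n+1)$-dimensional real Lie algebra with basis $\{Y,X_1,\dots,X_n\}$ and brackets $[Y,X_i]=X_i$, $[X_i,X_j]=0$ (i.e. the abelian algebra $\mathbb R^n$ extended by one element acting as the identity map). *)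

theory Defs
  imports "HOL-Analysis.Analysis"
begin

definition lie_algebra :: "('a::real_vector \<Rightarrow> 'a \<Rightarrow> 'a) \<Rightarrow> bool" where
  "lie_algebra br \<longleftrightarrow> bilinear br \<and> (\<forall>x. br x x = 0) \<and>
     (\<forall>x y z. br x (br y z) + br y (br z x) + br z (br x y) = 0)"

definition finite_dim_space :: "'a::real_vector itself \<Rightarrow> bool" where
  "finite_dim_space TYPE('a) \<longleftrightarrow> (\<exists>B::'a set. finite B \<and> span B = UNIV)"

definition is_basis :: "'a::real_vector set \<Rightarrow> bool" where
  "is_basis B \<longleftrightarrow> independent B \<and> span B = UNIV"

definition derived :: "('a::real_vector \<Rightarrow> 'a \<Rightarrow> 'a) \<Rightarrow> 'a set" where
  "derived br = span {br x y | x y. True}"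

text \<open>A linear endomorphism T restricted to an invariant subspace V is semisimple with
  real eigenvalues, i.e. diagonalizable over the reals: V has a basis of eigenvectors of T.\<close>
definition semisimple_real_on :: "('a::real_vector \<Rightarrow> 'a) \<Rightarrow> 'a set \<Rightarrow> bool" where
  "semisimple_real_on T V \<longleftrightarrow>
     (\<exists>B. B \<subseteq> V \<and> independent B \<and> span B = V \<and> (\<forall>b\<in>B. \<exists>c::real. T b = c *\<^sub>R b))"

definition inner_product_form :: "('a::real_vector \<Rightarrow> 'a \<Rightarrow> real) \<Rightarrow> bool" where
  "inner_product_form ip \<longleftrightarrow> bilinear ip \<and> (\<forall>x y. ip x y = ip y x) \<and>
     (\<forall>x. x \<noteq> 0 \<longrightarrow> ip x x > 0)"

definition geodesic_element ::
  "('a::real_vector \<Rightarrow> 'a \<Rightarrow> real) \<Rightarrow> ('a \<Rightarrow> 'a \<Rightarrow> 'a) \<Rightarrow> 'a \<Rightarrow> bool" where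
  "geodesic_element ip br X \<longleftrightarrow> X \<noteq> 0 \<and> (\<forall>Y. ip X (br X Y) = 0)"

definition iso_A :: "('a::real_vector \<Rightarrow> 'a \<Rightarrow> 'a) \<Rightarrow> nat \<Rightarrow> bool" where
  "iso_A br n \<longleftrightarrow> (\<exists>Y (X::nat \<Rightarrow> 'a).
      inj_on X {1..n} \<and> Y \<notin> X ` {1..n} \<and> is_basis (insert Y (X ` {1..n})) \<and>
      (\<forall>i\<in>{1..n}. br Y (X i) = X i) \<and>
      (\<forall>i\<in>{1..n}. \<forall>j\<in>{1..n}. br (X i) (X j) = 0))"

end

theory Submission
  imports Defs
begin
lemma eig_components_in:
  fixes T :: "'a::real_vector \<Rightarrow> 'a"
  assumes lin: "linear T" and sU: "subspace U" and inv: "\<And>u. u \<in> U \<Longrightarrow> T u \<in> U"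
  shows "finite C \<Longrightarrow> (\<And>c. c \<in> C \<Longrightarrow> T (x c) = c *\<^sub>R x c) \<Longrightarrow> (\<Sum>c\<in>C. x c) \<in> U
     \<Longrightarrow> \<forall>c\<in>C. x c \<in> U"
proof (induction C arbitrary: x rule: finite_induct)
  case empty
  then show ?case by simp
next
  case (insert d C)
  have s: "(\<Sum>c\<in>insert d C. x c) = x d + (\<Sum>c\<in>C. x c)"
    using insert by simp
  have "T (\<Sum>c\<in>insert d C. x c) = (\<Sum>c\<in>insert d C. T (x c))"
    using lin by (simp add: linear_sum)
  also have "\<dots> = (\<Sum>c\<in>insert d C. c *\<^sub>R x c)"
    using insert.prems(1) by (intro sum.cong) auto
  finally have "T (\<Sum>c\<in>insert d C. x c) - d *\<^sub>R (\<Sum>c\<in>insert d C. x c)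
      = (\<Sum>c\<in>C. (c - d) *\<^sub>R x c)"
    using insert by (simp add: scaleR_sum_right scaleR_diff_left sum_subtractf algebra_simps)
  moreover have "T (\<Sum>c\<in>insert d C. x c) - d *\<^sub>R (\<Sum>c\<in>insert d C. x c) \<in> U"
    using insert.prems(2) inv sU by (intro subspace_diff subspace_scale) auto
  ultimately have "(\<Sum>c\<in>C. (c - d) *\<^sub>R x c) \<in> U" by simp
  moreover have "\<And>c. c \<in> C \<Longrightarrow> T ((c - d) *\<^sub>R x c) = c *\<^sub>R ((c - d) *\<^sub>R x c)"
    using insert.prems(1) lin by (simp add: linear_scale)
  ultimately have IH: "\<forall>c\<in>C. (c - d) *\<^sub>R x c \<in> U"
    using insert.IH[of "\<lambda>c. (c - d) *\<^sub>R x c"] by blast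
  have xC: "\<forall>c\<in>C. x c \<in> U"
  proof
    fix c assume c: "c \<in> C"
    then have "c \<noteq> d" using insert by auto
    then have "x c = inverse (c - d) *\<^sub>R ((c - d) *\<^sub>R x c)" by simp
    then show "x c \<in> U" using IH c sU by (metis subspace_scale)
  qed
  then have "(\<Sum>c\<in>C. x c) \<in> U" using sU by (intro subspace_sum) auto
  then have "x d \<in> U" using insert.prems(2) s sU
    by (metis add_diff_cancel_right' subspace_diff)
  with xC show ?case by auto
qed

lemma eig_group:
  fixes T :: "'a::real_vector \<Rightarrow> 'a"
  assumes lin: "linear T" and sV: "subspace V"
    and v: "v \<in> span {w. w \<in> V \<and> (\<exists>c. T w = c *\<^sub>R w)}"
  shows "\<exists>C x. finite C \<and> (\<forall>c\<in>C. x c \<in> V \<and> T (x c) = c *\<^sub>R x c) \<and> v = (\<Sum>c\<in>C. x c)"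
  using v
proof (induction rule: span_induct_alt)
  case base
  show ?case by (rule exI[of _ "{}"]) auto
next
  case (step c0 w y)
  from step.hyps(1) obtain e where w: "w \<in> V" "T w = e *\<^sub>R w" by auto
  from step.IH obtain C x where C: "finite C" "\<forall>c\<in>C. x c \<in> V \<and> T (x c) = c *\<^sub>R x c"
    "y = (\<Sum>c\<in>C. x c)" by blast
  define x' where "x' c = (if c \<in> C then x c else 0) + (if c = e then c0 *\<^sub>R w else 0)" for c
  have "(\<Sum>c\<in>insert e C. x' c) = (\<Sum>c\<in>insert e C. (if c \<in> C then x c else 0))
      + (\<Sum>c\<in>insert e C. (if c = e then c0 *\<^sub>R w else 0))"
    by (simp add: x'_def sum.distrib)
  also have "(\<Sum>c\<in>insert e C. (if c \<in> C then x c else 0)) = (\<Sum>c\<in>C. x c)"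
    proof -
    have "insert e C \<inter> C = C" by auto
    then show ?thesis using C(1) by (simp add: sum.If_cases)
  qed
  also have "(\<Sum>c\<in>insert e C. (if c = e then c0 *\<^sub>R w else 0)) = c0 *\<^sub>R w"
    using C(1) by (simp add: sum.delta)
  finally have "c0 *\<^sub>R w + y = (\<Sum>c\<in>insert e C. x' c)" using C(3) by simp
  moreover have "\<forall>c\<in>insert e C. x' c \<in> V \<and> T (x' c) = c *\<^sub>R x' c"
    using C(2) w sV lin
    by (auto simp: x'_def linear_add linear_scale linear_0 subspace_add subspace_scale subspace_0 scaleR_add_right mult.commute)
  ultimately show ?case using C(1) by blast
qed

lemma eig_restrict:
  fixes T :: "'a::real_vector \<Rightarrow> 'a"
  assumes lin: "linear T" and sU: "subspace U" and sV: "subspace V" and UV: "U \<subseteq> V"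
    and inv: "\<And>u. u \<in> U \<Longrightarrow> T u \<in> U"
    and diag: "V \<subseteq> span {w. w \<in> V \<and> (\<exists>c. T w = c *\<^sub>R w)}"
  shows "U \<subseteq> span {w. w \<in> U \<and> (\<exists>c. T w = c *\<^sub>R w)}"
proof
  fix u assume u: "u \<in> U"
  then obtain C x where C: "finite C" "\<forall>c\<in>C. x c \<in> V \<and> T (x c) = c *\<^sub>R x c" "u = (\<Sum>c\<in>C. x c)"
    using eig_group[OF lin sV] diag UV by blast
  have "\<forall>c\<in>C. x c \<in> U"
    using eig_components_in[OF lin sU inv C(1), of x] C u by auto
  then show "u \<in> span {w. w \<in> U \<and> (\<exists>c. T w = c *\<^sub>R w)}"
    unfolding C(3) using C(2) by (intro span_sum span_base) auto
qed


locale LA =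
  fixes br :: "'a::real_vector \<Rightarrow> 'a \<Rightarrow> 'a"
  assumes fin: "finite_dim_space TYPE('a)" and lie: "lie_algebra br"
    and ab: "\<forall>u\<in>derived br. \<forall>v\<in>derived br. br u v = 0"
    and ss: "\<forall>Y. semisimple_real_on (br Y) (derived br)"
begin

abbreviation "D \<equiv> derived br"

lemma bil: "bilinear br" using lie by (simp add: lie_algebra_def)
lemma alt: "br x x = 0" using lie by (simp add: lie_algebra_def)
lemma jac: "br x (br y z) + br y (br z x) + br z (br x y) = 0" using lie by (simp add: lie_algebra_def)

lemma ladd: "br (x + y) z = br x z + br y z" by (rule bilinear_ladd[OF bil])
lemma radd: "br x (y + z) = br x y + br x z" by (rule bilinear_radd[OF bil])
lemma lscale: "br (c *\<^sub>R x) z = c *\<^sub>R br x z" by (rule bilinear_lmul[OF bil])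
lemma rscale: "br x (c *\<^sub>R z) = c *\<^sub>R br x z" by (rule bilinear_rmul[OF bil])
lemma lzero[simp]: "br 0 z = 0" by (rule bilinear_lzero[OF bil])
lemma rzero[simp]: "br x 0 = 0" by (rule bilinear_rzero[OF bil])
lemma lsub: "br (x - y) z = br x z - br y z" by (rule bilinear_lsub[OF bil])
lemma rsub: "br x (y - z) = br x y - br x z" by (rule bilinear_rsub[OF bil])
lemma lneg: "br (- x) z = - br x z" by (rule bilinear_lneg[OF bil])
lemma rneg: "br x (- z) = - br x z" by (rule bilinear_rneg[OF bil])
lemma linR: "linear (br x)" using bil by (simp add: bilinear_def)
lemma linL: "linear (\<lambda>x. br x z)" using bil by (simp add: bilinear_def)
lemma lsum: "br (\<Sum>i\<in>I. f i) z = (\<Sum>i\<in>I. br (f i) z)"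
  using linear_sum[OF linL] by (simp add: o_def)
lemma rsum: "br x (\<Sum>i\<in>I. f i) = (\<Sum>i\<in>I. br x (f i))"
  using linear_sum[OF linR] by (simp add: o_def)

lemma anti: "br x y = - br y x"
proof -
  have "br (x + y) (x + y) = br x x + br y x + (br x y + br y y)" by (simp only: ladd radd)
  then have h: "br x y + br y x = 0" using alt[of "x+y"] alt[of x] alt[of y] by (simp add: add.commute)
  then show ?thesis by (simp add: eq_neg_iff_add_eq_0)
qed

lemma subD: "subspace D" by (simp add: derived_def)
lemma brD: "br x y \<in> D" unfolding derived_def by (rule span_base) auto

lemma comm: "d \<in> D \<Longrightarrow> br Y (br Z d) = br Z (br Y d)"
proof -
  assume d: "d \<in> D"
  have "br d (br Y Z) = 0" using ab d brD by blast
  then have "br Y (br Z d) + br Z (br d Y) = 0" using jac[of Y Z d] by simp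
  then show ?thesis using anti[of d Y] by (simp add: rneg eq_neg_iff_add_eq_0)
qed

lemma indep_finite: "independent (S::'a set) \<Longrightarrow> finite S"
proof -
  assume i: "independent S"
  obtain S0 :: "'a set" where "finite S0" "span S0 = UNIV"
    using fin by (auto simp: finite_dim_space_def)
  then show "finite S" using independent_span_bound[of S0 S] i by auto
qed

lemma SD_fin:
  "finite Ys \<Longrightarrow> D \<subseteq> span {d. d \<in> D \<and> (\<forall>Y\<in>Ys. \<exists>c. br Y d = c *\<^sub>R d)}"
proof (induction Ys rule: finite_induct)
  case empty
  then show ?case by (auto intro: span_base)
next
  case (insert Y0 Ys)
  let ?Sk = "{d. d \<in> D \<and> (\<forall>Y\<in>Ys. \<exists>c. br Y d = c *\<^sub>R d)}"
  let ?Sk1 = "{d. d \<in> D \<and> (\<forall>Y\<in>insert Y0 Ys. \<exists>c. br Y d = c *\<^sub>R d)}"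
  have diag0: "D \<subseteq> span {w. w \<in> D \<and> (\<exists>c. br Y0 w = c *\<^sub>R w)}"
  proof -
    obtain B0 where B0: "B0 \<subseteq> D" "span B0 = D" "\<forall>b\<in>B0. \<exists>c. br Y0 b = c *\<^sub>R b"
      using ss[rule_format, of Y0] unfolding semisimple_real_on_def by blast
    then have "B0 \<subseteq> {w. w \<in> D \<and> (\<exists>c. br Y0 w = c *\<^sub>R w)}" by auto
    then have "span B0 \<subseteq> span {w. w \<in> D \<and> (\<exists>c. br Y0 w = c *\<^sub>R w)}" by (rule span_mono)
    then show ?thesis using B0(2) by simp
  qed
  have "?Sk \<subseteq> span ?Sk1"
  proof
    fix v assume v: "v \<in> ?Sk"
    define \<alpha> where "\<alpha> Y = (SOME c. br Y v = c *\<^sub>R v)" for Y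
    have \<alpha>: "\<forall>Y\<in>Ys. br Y v = \<alpha> Y *\<^sub>R v"
    proof
      fix Y assume "Y \<in> Ys"
      then have "\<exists>c. br Y v = c *\<^sub>R v" using v by auto
      then show "br Y v = \<alpha> Y *\<^sub>R v" unfolding \<alpha>_def by (rule someI_ex)
    qed
    define U where "U = {w. w \<in> D \<and> (\<forall>Y\<in>Ys. br Y w = \<alpha> Y *\<^sub>R w)}"
    have sU: "subspace U"
      unfolding subspace_def
    proof (intro conjI ballI allI)
      show "0 \<in> U" using subD by (simp add: U_def subspace_0)
      fix x y assume "x \<in> U" "y \<in> U"
      then have "x \<in> D" "y \<in> D" "\<forall>Y\<in>Ys. br Y x = \<alpha> Y *\<^sub>R x" "\<forall>Y\<in>Ys. br Y y = \<alpha> Y *\<^sub>R y"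
        by (simp_all add: U_def)
      then show "x + y \<in> U"
        unfolding U_def by (simp add: radd scaleR_add_right subspace_add[OF subD])
    next
      fix c x assume "x \<in> U"
      then have "x \<in> D" "\<forall>Y\<in>Ys. br Y x = \<alpha> Y *\<^sub>R x"
        by (simp_all add: U_def)
      then show "c *\<^sub>R x \<in> U"
        unfolding U_def by (simp add: rscale subspace_scale[OF subD])
    qed
    have vU: "v \<in> U" using v \<alpha> U_def by auto
    have UD: "U \<subseteq> D" by (auto simp: U_def)
    have inv: "\<And>u. u \<in> U \<Longrightarrow> br Y0 u \<in> U"
    proof -
      fix u assume u: "u \<in> U"
      have "br Y (br Y0 u) = \<alpha> Y *\<^sub>R br Y0 u" if "Y \<in> Ys" for Y
      proof -
        have uD: "u \<in> D" and uY: "br Y u = \<alpha> Y *\<^sub>R u" using u that by (auto simp: U_def)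
        have "br Y (br Y0 u) = br Y0 (br Y u)" by (rule comm[OF uD])
        also have "\<dots> = \<alpha> Y *\<^sub>R br Y0 u" by (simp only: uY rscale)
        finally show ?thesis .
      qed
      then show "br Y0 u \<in> U" using brD by (simp add: U_def)
    qed
    have "U \<subseteq> span {w. w \<in> U \<and> (\<exists>c. br Y0 w = c *\<^sub>R w)}"
      by (rule eig_restrict[OF linR sU subD UD inv diag0])
    also have "\<dots> \<subseteq> span ?Sk1"
      by (rule span_mono) (unfold U_def, blast)
    finally show "v \<in> span ?Sk1" using vU by auto
  qed
  then have "span ?Sk \<subseteq> span ?Sk1"
    by (intro span_minimal) auto
  with insert.IH show ?case by (rule subset_trans)
qed

lemma common_basis:
  "\<exists>B. B \<subseteq> D \<and> independent B \<and> span B = D \<and> finite B \<and> (\<forall>b\<in>B. \<forall>Y. \<exists>c. br Y b = c *\<^sub>R b)"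
proof -
  obtain A0 :: "'a set" where A0: "independent A0" "UNIV \<subseteq> span A0"
    using maximal_independent_subset[of UNIV] by blast
  have fA0: "finite A0" using indep_finite A0 by auto
  let ?Sa = "{d. d \<in> D \<and> (\<forall>Y\<in>A0. \<exists>c. br Y d = c *\<^sub>R d)}"
  let ?S = "{d. d \<in> D \<and> (\<forall>Y. \<exists>c. br Y d = c *\<^sub>R d)}"
  have key: "\<exists>c. br Y d = c *\<^sub>R d" if d: "d \<in> D" "\<forall>Y\<in>A0. \<exists>c. br Y d = c *\<^sub>R d" for d Y
  proof -
    have "Y \<in> span A0" using A0 by auto
    then show "\<exists>c. br Y d = c *\<^sub>R d"
    proof (induction rule: span_induct_alt)
      case base
      then show ?case by (auto intro: exI[of _ 0])
    next
      case (step c0 a y)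
      then obtain ca cy where "br a d = ca *\<^sub>R d" "br y d = cy *\<^sub>R d" using d by blast
      then have "br (c0 *\<^sub>R a + y) d = (c0 * ca + cy) *\<^sub>R d"
        by (simp add: ladd lscale scaleR_add_left)
      then show ?case by blast
    qed
  qed
  have "?Sa \<subseteq> ?S" using key by blast
  then have "span ?Sa \<subseteq> span ?S" by (rule span_mono)
  with SD_fin[OF fA0] have DS: "D \<subseteq> span ?S" by (rule subset_trans)
  obtain B where B: "B \<subseteq> ?S" "independent B" "?S \<subseteq> span B"
    using maximal_independent_subset[of ?S] by blast
  have s1: "span B \<subseteq> D" using B(1) subD by (intro span_minimal) auto
  have "span ?S \<subseteq> span B" using B(3) by (intro span_minimal) auto
  with DS have "D \<subseteq> span B" by (rule subset_trans)
  with s1 have "span B = D" by (rule subset_antisym)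
  moreover have "finite B" using indep_finite B(2) by blast
  moreover have "B \<subseteq> D" using B(1) by blast
  moreover have "\<forall>b\<in>B. \<forall>Y. \<exists>c. br Y b = c *\<^sub>R b" using B(1) by blast
  ultimately show ?thesis using B(2) by blast
qed


end

locale LB = LA br for br :: "'a::real_vector \<Rightarrow> 'a \<Rightarrow> 'a" +
  fixes B A :: "'a set"
  assumes BD: "B \<subseteq> D" and Bind: "independent B" and BspD: "span B = D" and Bfin: "finite B"
    and Beig: "\<forall>b\<in>B. \<forall>Y. \<exists>c. br Y b = c *\<^sub>R b"
    and BA: "B \<subseteq> A" and Aind: "independent A" and Asp: "span A = UNIV"
begin

definition co :: "'a \<Rightarrow> 'a \<Rightarrow> real" where "co v X = representation A X v"
definition lam :: "'a \<Rightarrow> 'a \<Rightarrow> real" where "lam b Y = co b (br Y b)"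
definition E :: "'a \<Rightarrow> 'a \<Rightarrow> real" where "E X Y = (\<Sum>v\<in>A. co v X * co v Y)"

lemma Afin: "finite A" using indep_finite Aind by blast

lemma co_lin: "linear (co v)"
proof -
  have eq: "((*\<^sub>R) :: real \<Rightarrow> real \<Rightarrow> real) = (*)" by (intro ext) simp
  have "Vector_Spaces.linear (*\<^sub>R) (*) (\<lambda>X. representation A X v)"
    by (rule linear_representation[OF Aind Asp])
  then show ?thesis unfolding co_def linear_def eq[symmetric] by simp
qed

lemma co_add: "co v (X + Y) = co v X + co v Y" using linear_add[OF co_lin] by blast
lemma co_scale: "co v (c *\<^sub>R X) = c * co v X" using linear_scale[OF co_lin] by simp
lemma co_zero[simp]: "co v 0 = 0" using linear_0[OF co_lin] by blast
lemma co_diff: "co v (X - Y) = co v X - co v Y" using linear_diff[OF co_lin] by blast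
lemma co_neg: "co v (- X) = - co v X" using linear_neg[OF co_lin] by blast
lemma co_sum: "co v (\<Sum>i\<in>I. f i) = (\<Sum>i\<in>I. co v (f i))"
  using linear_sum[OF co_lin] by (simp add: o_def)

lemma co_basis: "v' \<in> A \<Longrightarrow> co v v' = (if v = v' then 1 else 0)"
  unfolding co_def using representation_basis[OF Aind] by simp

lemma co_out: "S \<subseteq> A \<Longrightarrow> X \<in> span S \<Longrightarrow> v \<notin> S \<Longrightarrow> co v X = 0"
  unfolding co_def using representation_extend[OF Aind] representation_ne_zero by metis

lemma expand: "X = (\<Sum>v\<in>A. co v X *\<^sub>R v)"
  unfolding co_def using sum_representation_eq[OF Aind _ Afin] Asp by auto

lemma expandD: assumes "X \<in> D" shows "X = (\<Sum>b\<in>B. co b X *\<^sub>R b)"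
proof -
  have "X = (\<Sum>v\<in>A. co v X *\<^sub>R v)" by (rule expand)
  also have "\<dots> = (\<Sum>b\<in>B. co b X *\<^sub>R b)"
  proof (rule sum.mono_neutral_right[OF Afin BA])
    show "\<forall>i\<in>A - B. co i X *\<^sub>R i = 0" using co_out[OF BA, of X] assms BspD by auto
  qed
  finally show ?thesis .
qed

lemma eig: "b \<in> B \<Longrightarrow> br Y b = lam b Y *\<^sub>R b"
proof -
  assume b: "b \<in> B"
  then obtain c where c: "br Y b = c *\<^sub>R b" using Beig by blast
  have "lam b Y = c" unfolding lam_def c co_scale using co_basis[of b b] b BA by auto
  then show ?thesis using c by simp
qed

lemma lam_add: "lam b (X + Y) = lam b X + lam b Y" by (simp add: lam_def ladd co_add)
lemma lam_scale: "lam b (c *\<^sub>R X) = c * lam b X" by (simp add: lam_def lscale co_scale)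
lemma lam_diff: "lam b (X - Y) = lam b X - lam b Y" by (simp add: lam_def lsub co_diff)
lemma lam_zero: "lam b 0 = 0" by (simp add: lam_def)

lemma lamD: "d \<in> D \<Longrightarrow> b \<in> B \<Longrightarrow> lam b d = 0"
  using ab BD by (auto simp: lam_def)

lemma co_brD: assumes d: "d \<in> D" and b: "b \<in> B" shows "co b (br Y d) = lam b Y * co b d"
proof -
  have "br Y d = (\<Sum>b'\<in>B. co b' d *\<^sub>R (lam b' Y *\<^sub>R b'))"
    by (subst expandD[OF d]) (simp add: rsum rscale eig)
  then have "co b (br Y d) = (\<Sum>b'\<in>B. co b' d * (lam b' Y * co b b'))"
    by (simp add: co_sum co_scale mult.assoc)
  also have "\<dots> = (\<Sum>b'\<in>B. if b' = b then co b d * lam b Y else 0)"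
    using BA by (intro sum.cong) (auto simp: co_basis)
  also have "\<dots> = lam b Y * co b d" using b Bfin by simp
  finally show ?thesis .
qed

lemma cocycle:
  assumes b: "b \<in> B" and a: "lam b a = 1" and u: "lam b u = 0"
  shows "co b (br u Z) = - lam b Z * co b (br a u)"
proof -
  have "co b (br a (br u Z) + br u (br Z a) + br Z (br a u)) = 0" by (simp add: jac)
  then have "lam b a * co b (br u Z) + lam b u * co b (br Z a) + lam b Z * co b (br a u) = 0"
    by (simp add: co_add co_brD[OF brD b])
  then show ?thesis using a u by simp
qed

lemma E_bil: "bilinear E"
  unfolding bilinear_def E_def
  by (auto intro!: linearI simp: co_add co_scale sum.distrib sum_distrib_left algebra_simps)

lemma E_sym: "E X Y = E Y X" by (simp add: E_def mult.commute)

lemma E_pos: assumes "X \<noteq> 0" shows "E X X > 0"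
proof -
  have "\<exists>v\<in>A. co v X \<noteq> 0"
  proof (rule ccontr)
    assume "\<not> ?thesis"
    then have "X = 0" using expand[of X] by simp
    with assms show False by simp
  qed
  then obtain v where v: "v \<in> A" "co v X \<noteq> 0" by blast
  have "0 < co v X * co v X" using v(2) not_real_square_gt_zero by blast
  also have "\<dots> \<le> (\<Sum>v\<in>A. co v X * co v X)"
    using v Afin by (intro member_le_sum) auto
  finally show ?thesis by (simp add: E_def)
qed

lemma ip_Phi:
  fixes \<Phi> :: "'a \<Rightarrow> 'a"
  assumes lin: "linear \<Phi>" and inj: "\<And>X. \<Phi> X = 0 \<Longrightarrow> X = 0"
  shows "inner_product_form (\<lambda>X Y. E (\<Phi> X) (\<Phi> Y))"
  unfolding inner_product_form_def
proof (intro conjI allI impI)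
  show "bilinear (\<lambda>X Y. E (\<Phi> X) (\<Phi> Y))"
    using E_bil lin unfolding bilinear_def
    by (auto intro!: linearI simp: linear_add linear_scale bilinear_ladd[OF E_bil] bilinear_radd[OF E_bil]
        bilinear_lmul[OF E_bil] bilinear_rmul[OF E_bil])
  fix X Y show "E (\<Phi> X) (\<Phi> Y) = E (\<Phi> Y) (\<Phi> X)" by (rule E_sym)
next
  fix X :: 'a assume "X \<noteq> 0"
  then have "\<Phi> X \<noteq> 0" using inj by blast
  then show "E (\<Phi> X) (\<Phi> X) > 0" by (rule E_pos)
qed

lemma ipD:
  assumes "bilinear ip" and W: "W \<in> D"
  shows "ip X W = (\<Sum>b\<in>B. co b W * ip X b)"
proof -
  have "ip X W = ip X (\<Sum>b\<in>B. co b W *\<^sub>R b)" by (subst expandD[OF W]) simp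
  also have "\<dots> = (\<Sum>b\<in>B. co b W * ip X b)"
    using assms(1) unfolding bilinear_def
    by (simp add: linear_sum[of "ip X"] o_def linear_scale)
  finally show ?thesis .
qed

lemma geod_perp:
  assumes "bilinear ip" "X \<noteq> 0" "\<forall>b\<in>B. ip X b = 0"
  shows "geodesic_element ip br X"
  unfolding geodesic_element_def using assms ipD[OF assms(1) brD] by simp

lemma conclude:
  assumes ip: "inner_product_form ip" and sp: "span {X. geodesic_element ip br X} = UNIV"
  shows "\<exists>ip. inner_product_form ip \<and> (\<exists>B. is_basis B \<and> (\<forall>X\<in>B. geodesic_element ip br X))"
proof -
  obtain G where G: "G \<subseteq> {X. geodesic_element ip br X}" "independent G"
    "{X. geodesic_element ip br X} \<subseteq> span G"
    using maximal_independent_subset by blast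
  have "span G = UNIV" using G(3) sp by (metis span_minimal subspace_span top.extremum_unique)
  then show ?thesis using ip G unfolding is_basis_def by blast
qed

lemma span_from_duals:
  assumes bil: "bilinear ip"
    and Xb: "\<And>b. b \<in> B \<Longrightarrow> Xb b \<in> span {X. geodesic_element ip br X}"
    and dual: "\<And>b b'. b \<in> B \<Longrightarrow> b' \<in> B \<Longrightarrow> ip (Xb b) b' = (if b = b' then 1 else 0)"
  shows "span {X. geodesic_element ip br X} = UNIV"
proof -
  have "X \<in> span {X. geodesic_element ip br X}" for X
  proof -
    define X' where "X' = X - (\<Sum>b\<in>B. ip X b *\<^sub>R Xb b)"
    have lin: "linear (\<lambda>X. ip X b')" for b' using bil by (simp add: bilinear_def)
    have "ip X' b' = 0" if b': "b' \<in> B" for b'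
    proof -
      have "ip (\<Sum>b\<in>B. ip X b *\<^sub>R Xb b) b' = (\<Sum>b\<in>B. ip (ip X b *\<^sub>R Xb b) b')"
        using linear_sum[OF lin[of b']] by (simp add: o_def)
      then have "ip X' b' = ip X b' - (\<Sum>b\<in>B. ip X b * ip (Xb b) b')"
        unfolding X'_def by (simp add: bilinear_lsub[OF bil] bilinear_lmul[OF bil])
      also have "(\<Sum>b\<in>B. ip X b * ip (Xb b) b') = (\<Sum>b\<in>B. if b = b' then ip X b else 0)"
        using b' by (intro sum.cong) (auto simp: dual)
      also have "\<dots> = ip X b'" using b' Bfin by simp
      finally show ?thesis by simp
    qed
    then have "X' \<in> span {X. geodesic_element ip br X}"
      using geod_perp[OF bil] by (cases "X' = 0") (auto intro: span_base span_zero)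
    moreover have "(\<Sum>b\<in>B. ip X b *\<^sub>R Xb b) \<in> span {X. geodesic_element ip br X}"
      using Xb by (intro span_sum span_scale) auto
    ultimately show ?thesis unfolding X'_def by (metis diff_add_cancel span_add)
  qed
  then show ?thesis by auto
qed

lemma abelian_case:
  assumes "\<forall>x y. br x y = 0"
  shows "\<exists>ip. inner_product_form ip \<and> (\<exists>B. is_basis B \<and> (\<forall>X\<in>B. geodesic_element ip br X))"
proof (rule conclude)
  have "inner_product_form (\<lambda>X Y. E (id X) (id Y))" by (rule ip_Phi) (auto intro: linearI)
  then show ip: "inner_product_form E" by simp
  have "{X. geodesic_element E br X} = UNIV - {0}"
    using assms by (auto simp: geodesic_element_def bilinear_rzero[OF E_bil])
  then show "span {X. geodesic_element E br X} = UNIV" by simp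
qed

end

context LB begin

lemma E_basis: "v' \<in> A \<Longrightarrow> E X v' = co v' X"
proof -
  assume v': "v' \<in> A"
  have "E X v' = (\<Sum>v\<in>A. if v = v' then co v X else 0)"
    unfolding E_def by (intro sum.cong) (auto simp: co_basis v')
  also have "\<dots> = co v' X" using v' Afin by simp
  finally show ?thesis .
qed

lemma coB_B: "b \<in> B \<Longrightarrow> b' \<in> B \<Longrightarrow> co b b' = (if b = b' then 1 else 0)"
  using co_basis BA by auto

lemma coH_D: "h \<in> A - B \<Longrightarrow> d \<in> D \<Longrightarrow> co h d = 0"
  using co_out[OF BA] BspD by auto

lemma coB_H: "b \<in> B \<Longrightarrow> u \<in> span (A - B) \<Longrightarrow> co b u = 0"
  using co_out[of "A - B" u b] by auto

lemma co_comb: "b \<in> B \<Longrightarrow> co b (\<Sum>b'\<in>B. f b' *\<^sub>R b') = f b"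
proof -
  assume b: "b \<in> B"
  have "co b (\<Sum>b'\<in>B. f b' *\<^sub>R b') = (\<Sum>b'\<in>B. if b' = b then f b else 0)"
    by (simp add: co_sum co_scale) (intro sum.cong, auto simp: coB_B b)
  also have "\<dots> = f b" using b Bfin by simp
  finally show ?thesis .
qed

lemma brB_left: "b \<in> B \<Longrightarrow> br b Z = - (lam b Z *\<^sub>R b)"
  using anti[of b Z] eig by simp

lemma case_many:
  assumes h1: "h1 \<in> A - B" and h2: "h2 \<in> A - B" and h12: "h1 \<noteq> h2"
  shows "\<exists>ip. inner_product_form ip \<and> (\<exists>B. is_basis B \<and> (\<forall>X\<in>B. geodesic_element ip br X))"
proof -
  define nz where "nz b \<longleftrightarrow> (\<exists>Z. lam b Z \<noteq> 0)" for b
  define u where "u b = (if nz b then (if lam b h1 = 0 \<and> lam b h2 = 0 then h1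
      else lam b h2 *\<^sub>R h1 - lam b h1 *\<^sub>R h2) else 0)" for b
  define hb where "hb b = (if lam b h2 \<noteq> 0 then h1 else if lam b h1 \<noteq> 0 then h2 else h1)" for b
  define a where "a b = (let Z0 = (SOME Z. lam b Z \<noteq> 0) in (1 / lam b Z0) *\<^sub>R Z0)" for b
  define \<kappa> where "\<kappa> b = co b (br (a b) (u b))" for b
  define \<sigma> where "\<sigma> b X = (if nz b then (1 + \<kappa> b) / co (hb b) (u b) * co (hb b) X else 0)" for b X
  define \<Phi> where "\<Phi> X = X + (\<Sum>b\<in>B. \<sigma> b X *\<^sub>R b)" for X
  define ip where "ip X Y = E (\<Phi> X) (\<Phi> Y)" for X Y
  define Xb where "Xb b = u b + (\<Sum>b'\<in>B. ((if b' = b then 1 else 0) - \<sigma> b' (u b)) *\<^sub>R b')" for b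

  have h1D: "co h1 h1 = 1" "co h2 h2 = 1" "co h1 h2 = 0" "co h2 h1 = 0"
    using h1 h2 h12 co_basis by auto
  have hbH: "hb b \<in> A - B" for b using h1 h2 by (simp add: hb_def)
  have uH: "u b \<in> span (A - B)" for b
    using h1 h2 by (auto simp: u_def intro: span_base span_diff span_scale span_zero)
  have ulam: "lam b (u b) = 0" for b
    by (auto simp: u_def lam_diff lam_scale lam_zero)
  have uco: "nz b \<Longrightarrow> co (hb b) (u b) \<noteq> 0" for b
    using h1D by (auto simp: u_def hb_def co_diff co_scale)
  have a1: "nz b \<Longrightarrow> lam b (a b) = 1" for b
  proof -
    assume "nz b"
    then have "lam b (SOME Z. lam b Z \<noteq> 0) \<noteq> 0" unfolding nz_def by (rule someI_ex)
    then show ?thesis by (simp add: a_def Let_def lam_scale)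
  qed
  have \<sigma>_lin1: "\<sigma> b (X + Y) = \<sigma> b X + \<sigma> b Y" for b X Y
    by (cases "nz b") (simp_all add: \<sigma>_def co_add distrib_left)
  have \<sigma>_lin2: "\<sigma> b (c *\<^sub>R X) = c * \<sigma> b X" for b X c
    by (cases "nz b") (simp_all add: \<sigma>_def co_scale)
  note \<sigma>_lin = \<sigma>_lin1 \<sigma>_lin2
  have \<sigma>D: "d \<in> D \<Longrightarrow> \<sigma> b d = 0" for b d
    using coH_D[OF hbH] by (simp add: \<sigma>_def)
  have \<sigma>u: "nz b \<Longrightarrow> \<sigma> b (u b) = 1 + \<kappa> b" for b
    using uco by (simp add: \<sigma>_def)
  have linPhi: "linear \<Phi>"
  proof (rule linearI)
    fix X Y show "\<Phi> (X + Y) = \<Phi> X + \<Phi> Y"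
      by (simp add: \<Phi>_def \<sigma>_lin scaleR_add_left sum.distrib add_ac)
  next
    fix c X show "\<Phi> (c *\<^sub>R X) = c *\<^sub>R \<Phi> X"
      by (simp add: \<Phi>_def \<sigma>_lin scaleR_add_right scaleR_sum_right)
  qed
  have sumD: "(\<Sum>b\<in>B. c b *\<^sub>R b) \<in> D" for c
  proof -
    have "(\<Sum>b\<in>B. c b *\<^sub>R b) \<in> span B" by (intro span_sum span_scale span_base)
    then show ?thesis using BspD by simp
  qed
  have injPhi: "X = 0" if "\<Phi> X = 0" for X
  proof -
    have "X = - (\<Sum>b\<in>B. \<sigma> b X *\<^sub>R b)" using that by (simp add: \<Phi>_def eq_neg_iff_add_eq_0)
    then have "X \<in> D" using subspace_neg[OF subD sumD[of "\<lambda>b. \<sigma> b X"]] by simp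
    then have "\<forall>b. \<sigma> b X = 0" using \<sigma>D by blast
    then show "X = 0" using that by (simp add: \<Phi>_def)
  qed
  have ipf: "inner_product_form ip"
    unfolding ip_def by (rule ip_Phi[OF linPhi injPhi])
  then have bil: "bilinear ip" by (simp add: inner_product_form_def)
  have ipB: "ip X b' = co b' X + \<sigma> b' X" if b': "b' \<in> B" for X b'
  proof -
    have "\<Phi> b' = b'" using \<sigma>D[of b'] b' BD by (auto simp: \<Phi>_def)
    then have "ip X b' = co b' (\<Phi> X)" using E_basis[of b'] b' BA by (auto simp: ip_def)
    also have "\<dots> = co b' X + \<sigma> b' X" by (simp add: \<Phi>_def co_add co_comb[OF b'])
    finally show ?thesis .
  qed
  have dual: "ip (Xb b) b'' = (if b = b'' then 1 else 0)" if "b \<in> B" "b'' \<in> B" for b b''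
  proof -
    have "co b'' (Xb b) = (if b'' = b then 1 else 0) - \<sigma> b'' (u b)"
      unfolding Xb_def using that by (simp add: co_add coB_H[OF _ uH] co_comb)
    moreover have "\<sigma> b'' (Xb b) = \<sigma> b'' (u b)"
      unfolding Xb_def using \<sigma>D sumD by (simp add: \<sigma>_lin)
    ultimately show ?thesis using ipB[OF that(2)] by auto
  qed
  have geo: "geodesic_element ip br (Xb b)" if b: "b \<in> B" for b
    unfolding geodesic_element_def
  proof (intro conjI allI)
    show "Xb b \<noteq> 0"
    proof
      assume "Xb b = 0"
      then have "ip (Xb b) b = 0" using bilinear_lzero[OF bil] by simp
      then show False using dual[OF b b] by simp
    qed
    fix Z
    have "ip (Xb b) (br (Xb b) Z) = (\<Sum>b'\<in>B. co b' (br (Xb b) Z) * ip (Xb b) b')"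
      by (rule ipD[OF bil brD])
    also have "\<dots> = (\<Sum>b'\<in>B. if b' = b then co b (br (Xb b) Z) else 0)"
      using b by (intro sum.cong) (auto simp: dual)
    also have "\<dots> = co b (br (Xb b) Z)" using b Bfin by simp
    also have "\<dots> = co b (br (u b) Z)
        + (\<Sum>b'\<in>B. ((if b' = b then 1 else 0) - \<sigma> b' (u b)) * co b (br b' Z))"
      unfolding Xb_def by (simp add: ladd lsum lscale co_add co_sum co_scale)
    also have "(\<Sum>b'\<in>B. ((if b' = b then 1 else 0) - \<sigma> b' (u b)) * co b (br b' Z))
        = (\<Sum>b'\<in>B. if b' = b then (\<sigma> b (u b) - 1) * lam b Z else 0)"
      using b by (intro sum.cong) (auto simp: brB_left co_neg co_scale coB_B algebra_simps)
    also have "\<dots> = (\<sigma> b (u b) - 1) * lam b Z" using b Bfin by simp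
    finally have eq: "ip (Xb b) (br (Xb b) Z) = co b (br (u b) Z) + (\<sigma> b (u b) - 1) * lam b Z"
      by simp
    show "ip (Xb b) (br (Xb b) Z) = 0"
    proof (cases "nz b")
      case True
      have "co b (br (u b) Z) = - lam b Z * \<kappa> b"
        unfolding \<kappa>_def by (rule cocycle[OF b a1[OF True] ulam])
      then show ?thesis using eq \<sigma>u[OF True] by (simp add: algebra_simps)
    next
      case False
      then have "lam b Z = 0" "u b = 0" by (auto simp: nz_def u_def)
      then show ?thesis using eq by simp
    qed
  qed
  have "span {X. geodesic_element ip br X} = UNIV"
  proof (rule span_from_duals[OF bil, of Xb])
    fix b assume "b \<in> B" then show "Xb b \<in> span {X. geodesic_element ip br X}"
      using geo by (intro span_base) auto
  next
    fix b b' assume "b \<in> B" "b' \<in> B" then show "ip (Xb b) b' = (if b = b' then 1 else 0)"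
      by (rule dual)
  qed
  then show ?thesis by (rule conclude[OF ipf])
qed

end

lemma quad_root:
  fixes a b c s :: real
  assumes "a \<noteq> 0" "s * s = b * b - 4 * a * c"
  shows "c + ((- b + s) / (2 * a)) * b + ((- b + s) / (2 * a)) * ((- b + s) / (2 * a)) * a = 0"
proof -
  have "4 * a * (c + ((- b + s) / (2 * a)) * b + ((- b + s) / (2 * a)) * ((- b + s) / (2 * a)) * a)
      = 4 * a * c + 2 * (- b + s) * b + (- b + s) * (- b + s)"
    using assms(1) by (simp add: field_simps)
  also have "\<dots> = 0" using assms(2) by (simp add: algebra_simps)
  finally show ?thesis using assms(1) by simp
qed

lemma sign_pick:
  fixes qv qp qq :: real
  assumes "qp * qq < 0" "qv \<noteq> 0"
  shows "qv * qp < 0 \<or> qv * qq < 0"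
  using assms by (auto simp: mult_less_0_iff)

lemma iso_span:
  fixes ip :: "'a::real_vector \<Rightarrow> 'a \<Rightarrow> real" and T :: "'a \<Rightarrow> 'a"
  assumes bil: "bilinear ip" and linT: "linear T" and sV: "subspace V"
    and TV: "\<And>v. v \<in> V \<Longrightarrow> T v \<in> V"
    and p: "p \<in> V" and q: "q \<in> V" and pq: "ip p (T p) * ip q (T q) < 0"
  shows "V \<subseteq> span {v. v \<in> V \<and> ip v (T v) = 0}"
proof
  fix v assume v: "v \<in> V"
  let ?S = "{v. v \<in> V \<and> ip v (T v) = 0}"
  show "v \<in> span ?S"
  proof (cases "ip v (T v) = 0")
    case True
    then show ?thesis using v by (intro span_base) auto
  next
    case False
    then obtain r where r: "r \<in> V" "ip v (T v) * ip r (T r) < 0"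
      using sign_pick[OF pq False] p q by blast
    define a where "a = ip r (T r)"
    define c where "c = ip v (T v)"
    define b where "b = ip v (T r) + ip r (T v)"
    have a0: "a \<noteq> 0" using r by (auto simp: a_def)
    have expand: "ip (v + t *\<^sub>R r) (T (v + t *\<^sub>R r)) = c + t * b + t * t * a" for t
      using bil linT
      by (simp add: a_def b_def c_def linear_add linear_scale bilinear_ladd bilinear_radd
          bilinear_lmul bilinear_rmul algebra_simps)
    define d where "d = b * b - 4 * a * c"
    have dpos: "d > 0"
    proof -
      have "a * c < 0" using r by (simp add: a_def c_def mult.commute)
      moreover have "b * b \<ge> 0" by simp
      moreover have "4 * a * c = 4 * (a * c)" by simp
      ultimately show ?thesis unfolding d_def by linarith
    qed
    define t1 where "t1 = (- b + sqrt d) / (2 * a)"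
    define t2 where "t2 = (- b + (- sqrt d)) / (2 * a)"
    have r1: "c + t1 * b + t1 * t1 * a = 0"
      unfolding t1_def by (rule quad_root[OF a0]) (use dpos in \<open>simp add: d_def\<close>)
    have r2: "c + t2 * b + t2 * t2 * a = 0"
      unfolding t2_def by (rule quad_root[OF a0]) (use dpos in \<open>simp add: d_def\<close>)
    have t12: "t1 \<noteq> t2" using dpos a0 by (simp add: t1_def t2_def divide_simps)
    have w1: "v + t1 *\<^sub>R r \<in> ?S" using r1 expand v r sV
      by (auto intro: subspace_add subspace_scale)
    have w2: "v + t2 *\<^sub>R r \<in> ?S" using r2 expand v r sV
      by (auto intro: subspace_add subspace_scale)
    have "v = (1 / (t1 - t2)) *\<^sub>R (t1 *\<^sub>R (v + t2 *\<^sub>R r) - t2 *\<^sub>R (v + t1 *\<^sub>R r))"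
    proof -
      have "t1 *\<^sub>R (v + t2 *\<^sub>R r) - t2 *\<^sub>R (v + t1 *\<^sub>R r) = (t1 - t2) *\<^sub>R v"
        by (simp add: algebra_simps)
      then show ?thesis using t12 by simp
    qed
    also have "\<dots> \<in> span ?S"
      using w1 w2 by (intro span_scale span_diff span_base)
    finally show ?thesis .
  qed
qed


context LB begin

lemma case_one:
  assumes yA: "y \<in> A" and yB: "y \<notin> B" and Aeq: "A = insert y B"
    and noiso: "\<not> (\<exists>n\<ge>1. iso_A br n)"
  shows "\<exists>ip. inner_product_form ip \<and> (\<exists>B. is_basis B \<and> (\<forall>X\<in>B. geodesic_element ip br X))"
proof -
  have yAB: "y \<in> A - B" using yA yB by simp
  have decomp: "Z - co y Z *\<^sub>R y \<in> D" for Z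
  proof -
    have "Z = (\<Sum>v\<in>insert y B. co v Z *\<^sub>R v)" using expand[of Z] Aeq by simp
    also have "\<dots> = co y Z *\<^sub>R y + (\<Sum>b\<in>B. co b Z *\<^sub>R b)" using yB Bfin by simp
    finally have "Z - co y Z *\<^sub>R y = (\<Sum>b\<in>B. co b Z *\<^sub>R b)" by (simp add: algebra_simps)
    moreover have "(\<Sum>b\<in>B. co b Z *\<^sub>R b) \<in> span B" by (intro span_sum span_scale span_base)
    ultimately show ?thesis using BspD by simp
  qed
  have yD: "y \<notin> D"
  proof
    assume "y \<in> D"
    then have "co y y = 0" by (rule coH_D[OF yAB])
    then show False using co_basis[OF yA] by simp
  qed
  define c where "c b = lam b y" for b
  consider (empty) "B = {}" | (const) "B \<noteq> {}" "\<forall>b\<in>B. \<forall>b'\<in>B. c b = c b'"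
    | (diff) "\<exists>b1\<in>B. \<exists>b2\<in>B. c b1 \<noteq> c b2" by blast
  then show ?thesis
  proof cases
    case empty
    then have "D = {0}" using BspD by simp
    then have "\<forall>x z. br x z = 0" using brD by blast
    then show ?thesis by (rule abelian_case)
  next
    case const
    then obtain b0 where b0: "b0 \<in> B" by blast
    define c0 where "c0 = c b0"
    have cc: "b \<in> B \<Longrightarrow> c b = c0" for b using const(2) b0 unfolding c0_def by blast
    show ?thesis
    proof (cases "c0 = 0")
      case True
      have lam0: "lam b Z = 0" if b: "b \<in> B" for b Z
      proof -
        have "lam b Z = lam b (co y Z *\<^sub>R y + (Z - co y Z *\<^sub>R y))" by simp
        also have "\<dots> = co y Z * c b" by (simp only: lam_add lam_scale lamD[OF decomp b] c_def add_0_right)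
        finally show ?thesis using cc[OF b] True by simp
      qed
      have brD0: "br Z d = 0" if d: "d \<in> D" for Z d
      proof -
        have "br Z d = (\<Sum>b\<in>B. co b d *\<^sub>R br Z b)" by (subst expandD[OF d]) (simp add: rsum rscale)
        also have "\<dots> = 0" by (intro sum.neutral) (simp add: eig lam0)
        finally show ?thesis .
      qed
      have "br x z = 0" for x z
      proof -
        have "br x z = br (co y x *\<^sub>R y + (x - co y x *\<^sub>R y)) z" by simp
        also have "\<dots> = co y x *\<^sub>R br y z + br (x - co y x *\<^sub>R y) z" by (simp only: ladd lscale)
        also have "br (x - co y x *\<^sub>R y) z = 0" using brD0[OF decomp] anti by (metis neg_equal_0_iff_equal)
        also have "br y z = br y (co y z *\<^sub>R y + (z - co y z *\<^sub>R y))" by simp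
        also have "\<dots> = 0" by (simp only: radd rscale alt brD0[OF decomp]) simp
        finally show ?thesis by simp
      qed
      then show ?thesis using abelian_case by blast
    next
      case False
      define n where "n = card B"
      have n1: "n \<ge> 1" using const(1) Bfin by (simp add: n_def Suc_le_eq card_gt_0_iff)
      obtain X where X: "bij_betw X {1..n} B" using ex_bij_betw_nat_finite_1[OF Bfin] n_def by blast
      define Y0 where "Y0 = (1 / c0) *\<^sub>R y"
      have XB: "X ` {1..n} = B" using X by (simp add: bij_betw_def)
      have Y0D: "Y0 \<notin> span B"
      proof
        assume "Y0 \<in> span B"
        then have "c0 *\<^sub>R Y0 \<in> D" using BspD subspace_scale[OF subD] by simp
        then show False using yD False by (simp add: Y0_def)
      qed
      have "iso_A br n"
        unfolding iso_A_def
      proof (intro exI conjI ballI)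
        show "inj_on X {1..n}" using X by (simp add: bij_betw_def)
        show "Y0 \<notin> X ` {1..n}"
        proof
          assume "Y0 \<in> X ` {1..n}"
          then have "Y0 \<in> B" using XB by simp
          then show False using Y0D span_base by metis
        qed
        show "is_basis (insert Y0 (X ` {1..n}))"
          unfolding is_basis_def XB
        proof
          show "independent (insert Y0 B)" using Y0D Bind by (simp add: independent_insert)
          have "Z \<in> span (insert Y0 B)" for Z
          proof -
            have "Z = (c0 * co y Z) *\<^sub>R Y0 + (Z - co y Z *\<^sub>R y)" using False by (simp add: Y0_def)
            moreover have "Z - co y Z *\<^sub>R y \<in> span (insert Y0 B)"
              using decomp[of Z] BspD span_mono[of B "insert Y0 B"] by auto
            moreover have "(c0 * co y Z) *\<^sub>R Y0 \<in> span (insert Y0 B)"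
              by (intro span_scale span_base) simp
            ultimately show ?thesis using span_add by metis
          qed
          then show "span (insert Y0 B) = UNIV" by auto
        qed
        fix i assume i: "i \<in> {1..n}"
        then have Xi: "X i \<in> B" using XB by blast
        show "br Y0 (X i) = X i"
          using eig[OF Xi, of y] cc[OF Xi] False by (simp add: Y0_def lscale c_def)
        fix j assume "j \<in> {1..n}"
        then have "X j \<in> B" using XB by blast
        then show "br (X i) (X j) = 0" using ab Xi BD by blast
      qed
      then show ?thesis using noiso n1 by blast
    qed
  next
    case diff
    then obtain b1 b2 where b12: "b1 \<in> B" "b2 \<in> B" "c b1 \<noteq> 0" "c b1 \<noteq> c b2"
      by (metis)
    define c1 where "c1 = c b1"
    define c2 where "c2 = c b2"
    have c1: "c1 \<noteq> 0" "c1 \<noteq> c2" using b12 by (auto simp: c1_def c2_def)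
    have b1b2: "b1 \<noteq> b2" using b12 by auto
    define \<kappa> where "\<kappa> = - (2 + \<bar>c1 * c2\<bar>) / (c2 - c1)"
    define t where "t = 1 / c1"
    define x where "x = t - \<kappa>"
    define q where "q = x *\<^sub>R b1 + b2"
    define \<Phi> where "\<Phi> X = X + (\<kappa> * co b2 X) *\<^sub>R b1" for X
    define ip where "ip X Y = E (\<Phi> X) (\<Phi> Y)" for X Y
    have cob: "co b1 b1 = 1" "co b2 b2 = 1" "co b1 b2 = 0" "co b2 b1 = 0" "co b2 y = 0" "co b1 y = 0"
      using coB_B b12 b1b2 co_basis[OF yA] yB by auto
    have linPhi: "linear \<Phi>"
      by (rule linearI) (simp_all add: \<Phi>_def co_add co_scale algebra_simps)
    have injPhi: "X = 0" if "\<Phi> X = 0" for X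
    proof -
      have "co b2 (\<Phi> X) = co b2 X" by (simp add: \<Phi>_def co_add co_scale cob)
      then have "co b2 X = 0" using that by simp
      then show ?thesis using that by (simp add: \<Phi>_def)
    qed
    have ipf: "inner_product_form ip" unfolding ip_def by (rule ip_Phi[OF linPhi injPhi])
    then have bil: "bilinear ip" by (simp add: inner_product_form_def)
    have Eb: "E b1 b1 = 1" "E b2 b2 = 1" "E b1 b2 = 0" "E b2 b1 = 0"
      using E_basis b12 BA cob by auto
    have E2: "E (\<alpha> *\<^sub>R b1 + \<beta> *\<^sub>R b2) (\<gamma> *\<^sub>R b1 + \<delta> *\<^sub>R b2) = \<alpha> * \<gamma> + \<beta> * \<delta>" for \<alpha> \<beta> \<gamma> \<delta>
      by (simp add: bilinear_ladd[OF E_bil] bilinear_radd[OF E_bil] bilinear_lmul[OF E_bil]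
          bilinear_rmul[OF E_bil] Eb)
    have eigy: "br y b1 = c1 *\<^sub>R b1" "br y b2 = c2 *\<^sub>R b2"
      using eig b12 by (auto simp: c1_def c2_def c_def)
    have Qp: "ip b1 (br y b1) = c1"
    proof -
      have "ip b1 (br y b1) = E (1 *\<^sub>R b1 + 0 *\<^sub>R b2) (c1 *\<^sub>R b1 + 0 *\<^sub>R b2)"
        by (simp add: ip_def \<Phi>_def eigy co_scale cob)
      then show ?thesis by (simp only: E2 mult_1 mult_zero_left add_0_right)
    qed
    have Qq: "ip q (br y q) = t * (x * c1 + \<kappa> * c2) + c2"
    proof -
      have "\<Phi> q = (x + \<kappa>) *\<^sub>R b1 + 1 *\<^sub>R b2"
        by (simp add: \<Phi>_def q_def co_add co_scale cob algebra_simps)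
      moreover have "\<Phi> (br y q) = (x * c1 + \<kappa> * c2) *\<^sub>R b1 + c2 *\<^sub>R b2"
        by (simp add: \<Phi>_def q_def radd rscale eigy co_add co_scale cob algebra_simps)
      ultimately have "ip q (br y q) = (x + \<kappa>) * (x * c1 + \<kappa> * c2) + 1 * c2"
        by (simp only: ip_def E2)
      then show ?thesis by (simp add: x_def)
    qed
    have "c1 * ip q (br y q) = 1 + \<kappa> * (c2 - c1) + c1 * c2"
      unfolding Qq using c1 by (simp add: t_def x_def field_simps)
    also have "\<kappa> * (c2 - c1) = - (2 + \<bar>c1 * c2\<bar>)" using c1 by (simp add: \<kappa>_def)
    finally have "c1 * ip q (br y q) < 0" by (simp add: abs_if)
    then have pq: "ip b1 (br y b1) * ip q (br y q) < 0" by (simp add: Qp)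
    have qD: "q \<in> D" using b12 BD subD by (simp add: q_def subspace_add subspace_scale subset_iff)
    have iso: "D \<subseteq> span {v. v \<in> D \<and> ip v (br y v) = 0}"
      by (rule iso_span[OF bil linR subD _ _ qD pq]) (use brD b12 BD in auto)
    have geoD: "geodesic_element ip br d" if "d \<in> D" "ip d (br y d) = 0" "d \<noteq> 0" for d
      unfolding geodesic_element_def
    proof (intro conjI allI)
      show "d \<noteq> 0" by fact
      fix Z
      have "br d Z = br d (co y Z *\<^sub>R y + (Z - co y Z *\<^sub>R y))" by simp
      also have "\<dots> = co y Z *\<^sub>R br d y + br d (Z - co y Z *\<^sub>R y)" by (simp only: radd rscale)
      also have "br d (Z - co y Z *\<^sub>R y) = 0" using ab that(1) decomp[of Z] by blast
      also have "br d y = - br y d" by (rule anti)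
      finally have "br d Z = - (co y Z *\<^sub>R br y d)" by simp
      then show "ip d (br d Z) = 0" using that(2) by (simp add: bilinear_rneg[OF bil] bilinear_rmul[OF bil])
    qed
    have geoy: "geodesic_element ip br y"
    proof (rule geod_perp[OF bil])
      show "y \<noteq> 0" using yD subspace_0[OF subD] by auto
      show "\<forall>b\<in>B. ip y b = 0"
      proof
        fix b assume b: "b \<in> B"
        have "\<Phi> y = y" by (simp add: \<Phi>_def cob)
        moreover have "\<Phi> b \<in> D" using b BD b12 subD
          by (auto simp: \<Phi>_def intro!: subspace_add subspace_scale)
        ultimately show "ip y b = 0"
          using E_basis[OF yA, of "\<Phi> b"] coH_D[OF yAB, of "\<Phi> b"] E_sym[of y "\<Phi> b"] by (simp add: ip_def)
      qed
    qed
    let ?G = "{X. geodesic_element ip br X}"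
    have "{v. v \<in> D \<and> ip v (br y v) = 0} \<subseteq> insert 0 ?G" using geoD by auto
    then have "span {v. v \<in> D \<and> ip v (br y v) = 0} \<subseteq> span ?G"
      using span_mono[of _ "insert 0 ?G"] by simp
    with iso have Dsp: "D \<subseteq> span ?G" by (rule subset_trans)
    have "Z \<in> span ?G" for Z
    proof -
      have "Z = co y Z *\<^sub>R y + (Z - co y Z *\<^sub>R y)" by simp
      moreover have "co y Z *\<^sub>R y \<in> span ?G" using geoy by (intro span_scale span_base) auto
      moreover have "Z - co y Z *\<^sub>R y \<in> span ?G" using Dsp decomp by auto
      ultimately show ?thesis by (metis span_add)
    qed
    then have "span ?G = UNIV" by auto
    then show ?thesis by (rule conclude[OF ipf])
  qed
qed

end

context LA begin

lemma main:
  assumes noiso: "\<not> (\<exists>n\<ge>1. iso_A br n)"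
  shows "\<exists>ip. inner_product_form ip \<and> (\<exists>B. is_basis B \<and> (\<forall>X\<in>B. geodesic_element ip br X))"
proof -
  obtain B where B: "B \<subseteq> D" "independent B" "span B = D" "finite B" "\<forall>b\<in>B. \<forall>Y. \<exists>c. br Y b = c *\<^sub>R b"
    using common_basis by blast
  define A where "A = extend_basis B"
  have A: "B \<subseteq> A" "independent A" "span A = UNIV"
    unfolding A_def using B(2) extend_basis_superset independent_extend_basis span_extend_basis by auto
  interpret LB br B A
    by (rule LB.intro[OF LA_axioms], unfold_locales) (use B A in auto)
  show ?thesis
  proof (cases "A - B = {}")
    case True
    then have "A = B" using A(1) by auto
    then have "D = UNIV" using A(3) B(3) by simp
    then have "\<forall>x z. br x z = 0" using ab by simp
    then show ?thesis by (rule abelian_case)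
  next
    case False
    then obtain y where y: "y \<in> A - B" by blast
    show ?thesis
    proof (cases "\<exists>h\<in>A - B. h \<noteq> y")
      case True
      then obtain h where "h \<in> A - B" "h \<noteq> y" by blast
      then show ?thesis using case_many[OF y] by blast
    next
      case False
      then have "A = insert y B" using y A(1) by blast
      then show ?thesis using case_one[OF _ _ _ noiso] y by blast
    qed
  qed
qed

end

theorem theorem1p2:
  fixes br :: "'a::real_vector \<Rightarrow> 'a \<Rightarrow> 'a"
  assumes "finite_dim_space TYPE('a)"
    and "lie_algebra br"
    and "\<forall>u\<in>derived br. \<forall>v\<in>derived br. br u v = 0"
    and "\<forall>Y. semisimple_real_on (br Y) (derived br)"
    and "\<not> (\<exists>n\<ge>1. iso_A br n)"
  shows "\<exists>ip. inner_product_form ip \<and>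
           (\<exists>B. is_basis B \<and> (\<forall>X\<in>B. geodesic_element ip br X))"
proof -
  interpret LA br using assms(1-4) by unfold_locales
  show ?thesis using main[OF assms(5)] .
qed


end
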